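(* In the curved-exam game described in the context, each payoff $U_i(x_i,x_{-i})$ is non-increasing in every opponent's effort $x_j$, $j\ne i$ (negative spillovers). Moreover, the game has at least one pure-strategy Nash equilibrium, and there exist pure Nash equilibria $x^*$ and $y^*$ such that every pure Nash equilibrium $x^e$ satisfies $x^*_i\le x^e_i\le y^*_i$ for all $i=1,\dots,n$.
   Context: The curved-exam game $\Gamma_n$: fix an integer $n\ge 2$, ability parameters $\alpha_1,\dots,\alpha_n\in(0,1)$ and a target mean $m\in(0,1)$. Each student $i\in\{1,\dots,n\}$ chooses $x_i\in[0,1]$; $\bar x=\frac1n\sum_j x_j$, $\bar x_{-i}=\frac1{n-1}\sum_{j\ne i}x_j$. Grade $G_i(x)=x_i+\max(m-\bar x,0)=\max\big(m+\frac{n-1}{n}(x_i-\bar x_{-i}),x_i\big)$ (not truncated at 1); payoff $U_i(x)=G_i(x)^{\alpha_i}(1-x_i)^{1-\alpha_i}$. A pure Nash equilibrium is a profile $x\in[0,1]^n$ such that for every $i$, $U_i(x)\ge U_i(x_i',x_{-i})$ for all $x_i'\in[0,1]$. *)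

theory Defs
  imports "HOL-Analysis.Analysis"
begin

text \<open>Students are indexed by 0..<n; a strategy profile is a function nat => real,
  of which only the values at indices < n matter.\<close>

definition mean_eff :: "nat \<Rightarrow> (nat \<Rightarrow> real) \<Rightarrow> real" where
  "mean_eff n x = (\<Sum>j<n. x j) / real n"

definition grade :: "nat \<Rightarrow> real \<Rightarrow> (nat \<Rightarrow> real) \<Rightarrow> nat \<Rightarrow> real" where
  "grade n m x i = x i + max (m - mean_eff n x) 0"

definition payoff :: "nat \<Rightarrow> (nat \<Rightarrow> real) \<Rightarrow> real \<Rightarrow> (nat \<Rightarrow> real) \<Rightarrow> nat \<Rightarrow> real" where
  "payoff n \<alpha> m x i = (grade n m x i) powr (\<alpha> i) * (1 - x i) powr (1 - \<alpha> i)"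

definition profile :: "nat \<Rightarrow> (nat \<Rightarrow> real) \<Rightarrow> bool" where
  "profile n x \<longleftrightarrow> (\<forall>i<n. 0 \<le> x i \<and> x i \<le> 1)"

definition is_pure_NE :: "nat \<Rightarrow> (nat \<Rightarrow> real) \<Rightarrow> real \<Rightarrow> (nat \<Rightarrow> real) \<Rightarrow> bool" where
  "is_pure_NE n \<alpha> m x \<longleftrightarrow> profile n x \<and>
     (\<forall>i<n. \<forall>t\<in>{0..1}. payoff n \<alpha> m (x(i := t)) i \<le> payoff n \<alpha> m x i)"

end

theory Submission
  imports Defs
begin

lemma key:
  fixes a a' t t' c :: real
  assumes "a' \<le> a" "t' \<le> t" "0 \<le> t'" "0 \<le> c" "c \<le> 1"
  shows "(t + max (a - c*t) 0) * (t' + max (a' - c*t') 0) \<le> (t + max (a' - c*t) 0) * (t' + max (a - c*t') 0)"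
proof -
  have ct: "c*t' \<le> c*t" using assms by (simp add: mult_left_mono)
  have D: "c*(t-t') \<le> t - t'" "0 \<le> c*(t-t')" using assms by (auto simp: mult_left_le_one_le)
  show ?thesis
  proof (cases "a' - c*t \<ge> 0")
    case True
    then have e: "max (a - c*t) 0 = a - c*t" "max (a' - c*t') 0 = a' - c*t'"
      "max (a' - c*t) 0 = a' - c*t" "max (a - c*t') 0 = a - c*t'" using assms ct by auto
    have "(t + (a' - c*t)) * (t' + (a - c*t')) - (t + (a - c*t)) * (t' + (a' - c*t'))
        = (a-a')*((t-t') - c*(t-t'))" by (simp add: algebra_simps)
    moreover have "(a-a')*((t-t') - c*(t-t')) \<ge> 0" using assms D by simp
    ultimately show ?thesis unfolding e by linarith
  next
    case r: False
    then have e3: "max (a' - c*t) 0 = 0" by simp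
    show ?thesis
    proof (cases "a - c*t' \<ge> 0")
      case s: False
      then have "max (a - c*t) 0 = 0" "max (a' - c*t') 0 = 0" "max (a - c*t') 0 = 0"
        using assms ct by auto
      then show ?thesis using e3 by simp
    next
      case s: True
      then have e4: "max (a - c*t') 0 = a - c*t'" by simp
      show ?thesis
      proof (cases "a - c*t \<ge> 0")
        case p: True
        then have e1: "max (a - c*t) 0 = a - c*t" by simp
        show ?thesis
        proof (cases "a' - c*t' \<ge> 0")
          case q: True
          then have e2: "max (a' - c*t') 0 = a' - c*t'" by simp
          have "t * (t' + (a - c*t')) - (t + (a - c*t)) * (t' + (a' - c*t'))
             = (a-a')*(t - t' - (a' - c*t')) + (c*t - a')*(t' + (a' - c*t'))"
            by (simp add: algebra_simps)
          moreover have "(a-a')*(t - t' - (a' - c*t')) \<ge> 0" using assms r D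
            by (intro mult_nonneg_nonneg) (auto simp: algebra_simps)
          moreover have "(c*t - a')*(t' + (a' - c*t')) \<ge> 0" using r q assms
            by (intro mult_nonneg_nonneg) auto
          ultimately show ?thesis unfolding e1 e2 e3 e4 add_0_right by linarith
        next
          case q: False
          then have e2: "max (a' - c*t') 0 = 0" by simp
          have "t * (t' + (a - c*t')) - (t + (a - c*t)) * t'
             = (a - c*t)*(t-t') + t*(c*(t-t'))"
            by (simp add: algebra_simps)
          moreover have "(a - c*t)*(t-t') + t*(c*(t-t')) \<ge> 0" using p assms D by simp
          ultimately show ?thesis unfolding e1 e2 e3 e4 by simp
        qed
      next
        case p: False
        then have e1: "max (a - c*t) 0 = 0" by simp
        have "max (a' - c*t') 0 \<le> a - c*t'" using s assms by auto
        then have "t * (t' + max (a' - c*t') 0) \<le> t * (t' + (a - c*t'))" using assms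
          by (intro mult_left_mono) auto
        then show ?thesis unfolding e1 e3 e4 by simp
      qed
    qed
  qed
qed

definition GG :: "nat \<Rightarrow> real \<Rightarrow> real \<Rightarrow> real \<Rightarrow> real" where
  "GG n m T t = t + max (m - (t + T) / real n) 0"
definition PP :: "nat \<Rightarrow> real \<Rightarrow> real \<Rightarrow> real \<Rightarrow> real \<Rightarrow> real" where
  "PP n a m T t = GG n m T t powr a * (1 - t) powr (1 - a)"
definition AS :: "nat \<Rightarrow> real \<Rightarrow> real \<Rightarrow> real \<Rightarrow> real set" where
  "AS n a m T = {t\<in>{0..1}. \<forall>s\<in>{0..1}. PP n a m T s \<le> PP n a m T t}"

lemma GG_nonneg: "0 \<le> t \<Longrightarrow> 0 \<le> GG n m T t"
  unfolding GG_def by simp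

lemma GG_alt: "n \<ge> 1 \<Longrightarrow> GG n m T t = t + max ((m - T / real n) - (1 / real n) * t) 0"
  unfolding GG_def by (simp add: add_divide_distrib algebra_simps)

lemma PP_cont:
  assumes "n \<ge> 1" "0 < a" "a < 1"
  shows "continuous_on {0..1} (PP n a m T)"
proof -
  have c1: "continuous_on {0..1::real} (GG n m T)"
    unfolding GG_def using assms by (intro continuous_intros) auto
  have "continuous_on {0..1} (\<lambda>t. GG n m T t powr a * (1 - t) powr (1 - a))"
    apply (intro continuous_on_mult continuous_on_powr' c1 continuous_intros)
    using assms by (auto intro: GG_nonneg)
  then show ?thesis unfolding PP_def[abs_def] .
qed

lemma PP_pos_a:
  assumes "0 < a" "a < 1"
  shows "0 < PP n a m T a"
proof -
  have "a \<le> GG n m T a" unfolding GG_def by simp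
  then have "0 < GG n m T a" using assms by linarith
  then show ?thesis unfolding PP_def using assms by simp
qed

lemma AS_props:
  assumes "n \<ge> 1" "0 < a" "a < 1"
  shows "AS n a m T \<noteq> {}" "closed (AS n a m T)" "AS n a m T \<subseteq> {0..1}"
    "\<And>t. t \<in> AS n a m T \<Longrightarrow> 0 < PP n a m T t"
proof -
  obtain t0 where t0: "t0 \<in> {0..1}" "\<forall>s\<in>{0..1}. PP n a m T s \<le> PP n a m T t0"
    using continuous_attains_sup[OF compact_Icc _ PP_cont[OF assms, where m=m and T=T]] by auto
  have eq: "AS n a m T = {0..1} \<inter> PP n a m T -` {PP n a m T t0..}"
    unfolding AS_def using t0 by force
  show "AS n a m T \<noteq> {}" unfolding AS_def using t0 by auto
  show "closed (AS n a m T)" unfolding eq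
    by (intro continuous_closed_preimage PP_cont assms) auto
  show "AS n a m T \<subseteq> {0..1}" unfolding AS_def by auto
  fix t assume "t \<in> AS n a m T"
  then have "PP n a m T a \<le> PP n a m T t" unfolding AS_def using assms by auto
  then show "0 < PP n a m T t" using PP_pos_a[OF assms(2,3), of n m T] by linarith
qed

lemma PP_supermod:
  assumes "n \<ge> 1" "0 < a" "a < 1" "0 \<le> t'" "t' \<le> t" "T \<le> T'"
  shows "PP n a m T t * PP n a m T' t' \<le> PP n a m T' t * PP n a m T t'"
proof -
  have c: "0 \<le> 1 / real n" "1 / real n \<le> 1" using assms by auto
  have a': "m - T' / real n \<le> m - T / real n" using assms by (simp add: divide_right_mono)
  have k: "GG n m T t * GG n m T' t' \<le> GG n m T' t * GG n m T t'"
    unfolding GG_alt[OF assms(1)] using key[OF a' assms(5,4) c] by (simp add: mult.commute)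
  have g: "0 \<le> GG n m T t" "0 \<le> GG n m T' t'" "0 \<le> GG n m T' t" "0 \<le> GG n m T t'"
    using assms by (auto intro: GG_nonneg)
  have "(GG n m T t * GG n m T' t') powr a \<le> (GG n m T' t * GG n m T t') powr a"
    using k g assms by (intro powr_mono2) auto
  then have "GG n m T t powr a * GG n m T' t' powr a \<le> GG n m T' t powr a * GG n m T t' powr a"
    using g by (simp add: powr_mult)
  then have "(GG n m T t powr a * GG n m T' t' powr a) * ((1 - t) powr (1 - a) * (1 - t') powr (1 - a))
      \<le> (GG n m T' t powr a * GG n m T t' powr a) * ((1 - t) powr (1 - a) * (1 - t') powr (1 - a))"
    by (intro mult_right_mono) auto
  then show ?thesis unfolding PP_def by (simp add: algebra_simps)
qed

lemma topkis:
  assumes "n \<ge> 1" "0 < a" "a < 1" "T \<le> T'" "t \<in> AS n a m T" "t' \<in> AS n a m T'"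
  shows "max t t' \<in> AS n a m T'" "min t t' \<in> AS n a m T"
proof -
  have tt: "t \<in> {0..1}" "t' \<in> {0..1}" using assms(5,6) unfolding AS_def by auto
  have "max t t' \<in> AS n a m T' \<and> min t t' \<in> AS n a m T"
  proof (cases "t \<le> t'")
    case True then show ?thesis using assms by (simp add: max_def min_def)
  next
    case False
    have sm: "PP n a m T t * PP n a m T' t' \<le> PP n a m T' t * PP n a m T t'"
      using PP_supermod[OF assms(1-3) _ _ assms(4), of t' t] tt False by auto
    have p1: "0 < PP n a m T t" "0 < PP n a m T' t'"
      using AS_props(4)[OF assms(1-3)] assms(5,6) by auto
    have o1: "PP n a m T t' \<le> PP n a m T t" "PP n a m T' t \<le> PP n a m T' t'"
      using assms(5,6) tt unfolding AS_def by auto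
    have nn: "0 \<le> PP n a m T' t" "0 \<le> PP n a m T t'" unfolding PP_def by auto
    have "PP n a m T t * PP n a m T' t' \<le> PP n a m T' t * PP n a m T t"
      using sm o1 nn by (meson mult_left_mono order_trans)
    then have A: "PP n a m T' t' \<le> PP n a m T' t" using p1
      by (simp add: mult.commute)
    have "PP n a m T t * PP n a m T' t' \<le> PP n a m T' t' * PP n a m T t'"
      using sm o1 nn by (meson mult_right_mono order_trans)
    then have B: "PP n a m T t \<le> PP n a m T t'" using p1
      by (simp add: mult.commute)
    have "t \<in> AS n a m T'" using A assms(6) tt unfolding AS_def by force
    moreover have "t' \<in> AS n a m T" using B assms(5) tt unfolding AS_def by force
    ultimately show ?thesis using False by (simp add: max_def min_def)
  qed
  then show "max t t' \<in> AS n a m T'" "min t t' \<in> AS n a m T" by auto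
qed


definition others :: "nat \<Rightarrow> (nat \<Rightarrow> real) \<Rightarrow> nat \<Rightarrow> real" where
  "others n x i = (\<Sum>j\<in>{..<n}-{i}. x j)"

lemma sum_upd:
  assumes "i < n"
  shows "(\<Sum>j<n. (x(i:=t)) j) = t + others n x i"
proof -
  have "(\<Sum>j<n. (x(i:=t)) j) = (x(i:=t)) i + (\<Sum>j\<in>{..<n}-{i}. (x(i:=t)) j)"
    using assms by (subst sum.remove[of "{..<n}" i]) auto
  also have "(\<Sum>j\<in>{..<n}-{i}. (x(i:=t)) j) = others n x i"
    unfolding others_def by (intro sum.cong) auto
  finally show ?thesis by simp
qed

lemma payoff_upd:
  assumes "i < n"
  shows "payoff n \<alpha> m (x(i:=t)) i = PP n (\<alpha> i) m (others n x i) t"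
  unfolding payoff_def grade_def mean_eff_def PP_def GG_def sum_upd[OF assms] by simp

lemma payoff_self:
  assumes "i < n"
  shows "payoff n \<alpha> m x i = PP n (\<alpha> i) m (others n x i) (x i)"
  using payoff_upd[OF assms, of \<alpha> m x "x i"] by simp

lemma others_upd: "others n (x(i:=t)) i = others n x i"
  unfolding others_def by (intro sum.cong) auto

lemma others_mono: "(\<forall>j<n. x j \<le> y j) \<Longrightarrow> others n x i \<le> others n y i"
  unfolding others_def by (intro sum_mono) auto

lemma NE_iff:
  "is_pure_NE n \<alpha> m x \<longleftrightarrow> profile n x \<and> (\<forall>i<n. x i \<in> AS n (\<alpha> i) m (others n x i))"
  unfolding is_pure_NE_def AS_def profile_def
  by (auto simp: payoff_upd payoff_self others_upd)

definition hi :: "nat \<Rightarrow> (nat \<Rightarrow> real) \<Rightarrow> real \<Rightarrow> (nat \<Rightarrow> real) \<Rightarrow> nat \<Rightarrow> real" where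
  "hi n \<alpha> m x i = Sup (AS n (\<alpha> i) m (others n x i))"
definition lo :: "nat \<Rightarrow> (nat \<Rightarrow> real) \<Rightarrow> real \<Rightarrow> (nat \<Rightarrow> real) \<Rightarrow> nat \<Rightarrow> real" where
  "lo n \<alpha> m x i = Inf (AS n (\<alpha> i) m (others n x i))"

lemma AS_bdd: "bdd_above (AS n a m T)" "bdd_below (AS n a m T)"
  unfolding AS_def by (auto intro: bdd_aboveI[of _ 1] bdd_belowI[of _ 0])

lemma hi_lo_props:
  assumes "n \<ge> 1" "0 < a" "a < 1"
  shows "Sup (AS n a m T) \<in> AS n a m T" "Inf (AS n a m T) \<in> AS n a m T"
    "\<And>t. t \<in> AS n a m T \<Longrightarrow> t \<le> Sup (AS n a m T)"
    "\<And>t. t \<in> AS n a m T \<Longrightarrow> Inf (AS n a m T) \<le> t"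
  using closed_contains_Sup[OF AS_props(1)[OF assms] AS_bdd(1) AS_props(2)[OF assms]]
    closed_contains_Inf[OF AS_props(1)[OF assms] AS_bdd(2) AS_props(2)[OF assms]]
    cSup_upper[OF _ AS_bdd(1)] cInf_lower[OF _ AS_bdd(2)]
  by (auto simp del: AS_def)

lemma hi_mono:
  assumes "n \<ge> 1" "0 < a" "a < 1" "T \<le> T'"
  shows "Sup (AS n a m T) \<le> Sup (AS n a m T')" "Inf (AS n a m T) \<le> Inf (AS n a m T')"
proof -
  have "max (Sup (AS n a m T)) (Sup (AS n a m T')) \<in> AS n a m T'"
    using topkis(1)[OF assms hi_lo_props(1)[OF assms(1-3)] hi_lo_props(1)[OF assms(1-3)]] .
  then show "Sup (AS n a m T) \<le> Sup (AS n a m T')" using hi_lo_props(3)[OF assms(1-3)] by fastforce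
  have "min (Inf (AS n a m T)) (Inf (AS n a m T')) \<in> AS n a m T"
    using topkis(2)[OF assms hi_lo_props(2)[OF assms(1-3)] hi_lo_props(2)[OF assms(1-3)]] .
  then show "Inf (AS n a m T) \<le> Inf (AS n a m T')" using hi_lo_props(4)[OF assms(1-3)] by fastforce
qed

theorem mainTheorem2:
  fixes n :: nat and \<alpha> :: "nat \<Rightarrow> real" and m :: real
  assumes "n \<ge> 2"
    and "\<forall>i<n. 0 < \<alpha> i \<and> \<alpha> i < 1"
    and "0 < m" and "m < 1"
  shows "(\<forall>x i j s t. profile n x \<and> i < n \<and> j < n \<and> j \<noteq> i
            \<and> s \<in> {0..1} \<and> t \<in> {0..1} \<and> s \<le> t
            \<longrightarrow> payoff n \<alpha> m (x(j := t)) i \<le> payoff n \<alpha> m (x(j := s)) i)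
       \<and> (\<exists>x. is_pure_NE n \<alpha> m x)
       \<and> (\<exists>xs ys. is_pure_NE n \<alpha> m xs \<and> is_pure_NE n \<alpha> m ys \<and>
            (\<forall>xe. is_pure_NE n \<alpha> m xe \<longrightarrow> (\<forall>i<n. xs i \<le> xe i \<and> xe i \<le> ys i)))"
proof -
  have n1: "n \<ge> 1" using assms by simp
  have al: "\<And>i. i < n \<Longrightarrow> 0 < \<alpha> i" "\<And>i. i < n \<Longrightarrow> \<alpha> i < 1" using assms by auto
  have Hin: "\<And>x i. i < n \<Longrightarrow> hi n \<alpha> m x i \<in> AS n (\<alpha> i) m (others n x i)"
    unfolding hi_def by (rule hi_lo_props(1)[OF n1 al(1) al(2)])
  have Lin: "\<And>x i. i < n \<Longrightarrow> lo n \<alpha> m x i \<in> AS n (\<alpha> i) m (others n x i)"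
    unfolding lo_def by (rule hi_lo_props(2)[OF n1 al(1) al(2)])
  have Hge: "\<And>x i t. i < n \<Longrightarrow> t \<in> AS n (\<alpha> i) m (others n x i) \<Longrightarrow> t \<le> hi n \<alpha> m x i"
    unfolding hi_def by (rule hi_lo_props(3)[OF n1 al(1) al(2)])
  have Lle: "\<And>x i t. i < n \<Longrightarrow> t \<in> AS n (\<alpha> i) m (others n x i) \<Longrightarrow> lo n \<alpha> m x i \<le> t"
    unfolding lo_def by (rule hi_lo_props(4)[OF n1 al(1) al(2)])
  have H01: "\<And>x i. i < n \<Longrightarrow> 0 \<le> hi n \<alpha> m x i \<and> hi n \<alpha> m x i \<le> 1"
    using Hin unfolding AS_def by auto
  have L01: "\<And>x i. i < n \<Longrightarrow> 0 \<le> lo n \<alpha> m x i \<and> lo n \<alpha> m x i \<le> 1"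
    using Lin unfolding AS_def by auto
  have Hmono: "\<And>x y i. \<forall>j<n. x j \<le> y j \<Longrightarrow> i < n \<Longrightarrow> hi n \<alpha> m x i \<le> hi n \<alpha> m y i"
    unfolding hi_def by (rule hi_mono(1)[OF n1 al(1) al(2) others_mono])
  have Lmono: "\<And>x y i. \<forall>j<n. x j \<le> y j \<Longrightarrow> i < n \<Longrightarrow> lo n \<alpha> m x i \<le> lo n \<alpha> m y i"
    unfolding lo_def by (rule hi_mono(2)[OF n1 al(1) al(2) others_mono])

  have P1: "\<forall>x i j s t. profile n x \<and> i < n \<and> j < n \<and> j \<noteq> i
            \<and> s \<in> {0..1} \<and> t \<in> {0..1} \<and> s \<le> t
            \<longrightarrow> payoff n \<alpha> m (x(j := t)) i \<le> payoff n \<alpha> m (x(j := s)) i"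
  proof (intro allI impI, elim conjE)
    fix x :: "nat \<Rightarrow> real" and i j :: nat and s t :: real
    assume px: "profile n x" and i: "i < n" and j: "j < n" "j \<noteq> i" and st: "s \<in> {0..1}" "t \<in> {0..1}" "s \<le> t"
    have ij: "i \<noteq> j" using j by auto
    have "(\<Sum>k<n. (x(j:=s)) k) \<le> (\<Sum>k<n. (x(j:=t)) k)" using st by (intro sum_mono) auto
    then have "mean_eff n (x(j:=s)) \<le> mean_eff n (x(j:=t))" unfolding mean_eff_def
      by (simp add: divide_right_mono)
    then have g: "grade n m (x(j:=t)) i \<le> grade n m (x(j:=s)) i" unfolding grade_def using ij by simp
    have g0: "0 \<le> grade n m (x(j:=t)) i" unfolding grade_def using px i ij unfolding profile_def by simp
    have e1: "payoff n \<alpha> m (x(j:=t)) i = grade n m (x(j:=t)) i powr \<alpha> i * (1 - x i) powr (1 - \<alpha> i)"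
      unfolding payoff_def using ij by simp
    have e2: "payoff n \<alpha> m (x(j:=s)) i = grade n m (x(j:=s)) i powr \<alpha> i * (1 - x i) powr (1 - \<alpha> i)"
      unfolding payoff_def using ij by simp
    show "payoff n \<alpha> m (x(j := t)) i \<le> payoff n \<alpha> m (x(j := s)) i"
      unfolding e1 e2 using g g0 al[OF i] by (intro mult_right_mono powr_mono2) auto
  qed

  define D where "D = {x. profile n x \<and> (\<forall>i<n. x i \<le> hi n \<alpha> m x i)}"
  define y where "y = (\<lambda>i. if i < n then Sup ((\<lambda>x. x i) ` D) else 0)"
  have z0: "(\<lambda>_. 0) \<in> D" unfolding D_def profile_def using H01 by auto
  have bddD: "\<And>i. i < n \<Longrightarrow> bdd_above ((\<lambda>x. x i) ` D)"
    unfolding D_def profile_def by (rule bdd_aboveI2[of _ _ 1]) auto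
  have le_y: "\<And>x i. x \<in> D \<Longrightarrow> i < n \<Longrightarrow> x i \<le> y i"
    unfolding y_def using bddD by (auto intro: cSup_upper)
  have yprof: "profile n y" unfolding profile_def
  proof (intro allI impI conjI)
    fix i assume i: "i < n"
    show "0 \<le> y i" using le_y[OF z0 i] by simp
    show "y i \<le> 1" unfolding y_def using i z0 by (auto intro!: cSup_least simp: D_def profile_def)
  qed
  have yD: "\<forall>i<n. y i \<le> hi n \<alpha> m y i"
  proof (intro allI impI)
    fix i assume i: "i < n"
    have "\<And>x. x \<in> D \<Longrightarrow> x i \<le> hi n \<alpha> m y i"
    proof -
      fix x assume x: "x \<in> D"
      then have "x i \<le> hi n \<alpha> m x i" using i unfolding D_def by auto
      also have "\<dots> \<le> hi n \<alpha> m y i" using Hmono[OF _ i, of x y] le_y[OF x] by auto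
      finally show "x i \<le> hi n \<alpha> m y i" .
    qed
    then show "y i \<le> hi n \<alpha> m y i" unfolding y_def using i z0 by (auto intro!: cSup_least)
  qed
  have zD: "(\<lambda>i. hi n \<alpha> m y i) \<in> D" unfolding D_def profile_def
    using H01 Hmono[of y "\<lambda>i. hi n \<alpha> m y i"] yD by auto
  have yfix: "\<forall>i<n. y i = hi n \<alpha> m y i" using le_y[OF zD] yD by (auto intro: antisym)
  have yNE: "is_pure_NE n \<alpha> m y" unfolding NE_iff using yprof yfix Hin by metis
  have ybound: "\<And>xe i. is_pure_NE n \<alpha> m xe \<Longrightarrow> i < n \<Longrightarrow> xe i \<le> y i"
  proof -
    fix xe i assume xe: "is_pure_NE n \<alpha> m xe" and i: "i < n"
    have "xe \<in> D" using xe unfolding NE_iff D_def using Hge by auto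
    then show "xe i \<le> y i" using le_y i by auto
  qed

  define E where "E = {x. profile n x \<and> (\<forall>i<n. lo n \<alpha> m x i \<le> x i)}"
  define w where "w = (\<lambda>i. if i < n then Inf ((\<lambda>x. x i) ` E) else 0)"
  have o1: "(\<lambda>_. 1) \<in> E" unfolding E_def profile_def using L01 by auto
  have bddE: "\<And>i. i < n \<Longrightarrow> bdd_below ((\<lambda>x. x i) ` E)"
    unfolding E_def profile_def by (rule bdd_belowI2[of _ 0]) auto
  have ge_w: "\<And>x i. x \<in> E \<Longrightarrow> i < n \<Longrightarrow> w i \<le> x i"
    unfolding w_def using bddE by (auto intro: cInf_lower)
  have wprof: "profile n w" unfolding profile_def
  proof (intro allI impI conjI)
    fix i assume i: "i < n"
    show "w i \<le> 1" using ge_w[OF o1 i] by simp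
    show "0 \<le> w i"
    proof -
      have ne: "(\<lambda>x. x i) ` E \<noteq> {}" using o1 by blast
      have "\<And>v. v \<in> (\<lambda>x. x i) ` E \<Longrightarrow> 0 \<le> v" using i unfolding E_def profile_def by auto
      then show ?thesis unfolding w_def using i cInf_greatest[OF ne] by simp
    qed
  qed
  have wE: "\<forall>i<n. lo n \<alpha> m w i \<le> w i"
  proof (intro allI impI)
    fix i assume i: "i < n"
    have "\<And>x. x \<in> E \<Longrightarrow> lo n \<alpha> m w i \<le> x i"
    proof -
      fix x assume x: "x \<in> E"
      have "lo n \<alpha> m w i \<le> lo n \<alpha> m x i" using Lmono[OF _ i, of w x] ge_w[OF x] by auto
      also have "\<dots> \<le> x i" using x i unfolding E_def by auto
      finally show "lo n \<alpha> m w i \<le> x i" .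
    qed
    then show "lo n \<alpha> m w i \<le> w i" unfolding w_def using i o1 by (auto intro!: cInf_greatest)
  qed
  have vE: "(\<lambda>i. lo n \<alpha> m w i) \<in> E" unfolding E_def profile_def
    using L01 Lmono[of "\<lambda>i. lo n \<alpha> m w i" w] wE by auto
  have wfix: "\<forall>i<n. w i = lo n \<alpha> m w i" using ge_w[OF vE] wE by (auto intro: antisym)
  have wNE: "is_pure_NE n \<alpha> m w" unfolding NE_iff using wprof wfix Lin by metis
  have wbound: "\<And>xe i. is_pure_NE n \<alpha> m xe \<Longrightarrow> i < n \<Longrightarrow> w i \<le> xe i"
  proof -
    fix xe i assume xe: "is_pure_NE n \<alpha> m xe" and i: "i < n"
    have "xe \<in> E" using xe unfolding NE_iff E_def using Lle by auto
    then show "w i \<le> xe i" using ge_w i by auto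
  qed
  show ?thesis using P1 yNE wNE ybound wbound by blast
qed

end
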